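(* Fix a vertex $v\in\mathbb{Z}_n$. For all $M,N\in\operatorname{CM}(A)$, the restriction map $\phi_v\colon\operatorname{Hom}_A(M,N)\to\operatorname{Hom}_Z(e_vM,e_vN)$, $f\mapsto f|_{e_vM}$, is injective, and its cokernel $K_v(M,N):=\operatorname{coker}\phi_v$ is a finite-dimensional $\mathbb{C}$-vector space. Thus there is a short exact sequence $0\to\operatorname{Hom}_A(M,N)\to\operatorname{Hom}_Z(e_vM,e_vN)\to K_v(M,N)\to 0$.
   Context: Fix integers $1\le m<n$. Let $Q$ be the quiver with vertex set $\mathbb{Z}_n$ and arrows $x_a\colon a-1\to a$ and $y_a\colon a\to a-1$ for $a\in\{1,\dots,n\}$. Let $A$ be the quotient of the complete path algebra $\widehat{\mathbb{C}Q}$ by the relations $xy=yx$ and $x^m=y^{n-m}$ at every vertex; its centre is $Z=\mathbb{C}[[t]]$, $t=xy$, and $e_j$ denotes the primitive idempotent at vertex $j$. $\operatorname{CM}(A)$ is the category of finitely generated $A$-modules that are free as $Z$-modules. *)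

theory Defs
  imports "HOL-Computational_Algebra.Formal_Power_Series" "Jordan_Normal_Form.Matrix"
begin

text \<open>Vertices of the quiver are the residues 0..n-1 (representing Z_n).
  An object of CM(A) is encoded as a representation of the quiver by free
  C[[t]]-modules of finite rank: rank r j at vertex j, with t acting as fps_X;
  X j : vertex j -> vertex (j+1) mod n is the arrow x_(j+1), and
  Y j : vertex (j+1) mod n -> vertex j is the arrow y_(j+1).
  Matrices act on column vectors.\<close>

definition vsucc :: "nat \<Rightarrow> nat \<Rightarrow> nat" where
  "vsucc n j = (j + 1) mod n"

definition vpred :: "nat \<Rightarrow> nat \<Rightarrow> nat" where
  "vpred n j = (j + (n - 1)) mod n"

fun xpath :: "nat \<Rightarrow> (nat \<Rightarrow> nat) \<Rightarrow> (nat \<Rightarrow> 'a::semiring_1 mat) \<Rightarrow> nat \<Rightarrow> nat \<Rightarrow> 'a mat" where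
  "xpath n r X j 0 = 1\<^sub>m (r j)"
| "xpath n r X j (Suc k) = X ((j + k) mod n) * xpath n r X j k"

text \<open>Product of k consecutive y-arrows starting at vertex j
  (path j -> j-1 -> ... -> j-k).\<close>
fun ypath :: "nat \<Rightarrow> (nat \<Rightarrow> nat) \<Rightarrow> (nat \<Rightarrow> 'a::semiring_1 mat) \<Rightarrow> nat \<Rightarrow> nat \<Rightarrow> 'a mat" where
  "ypath n r Y j 0 = 1\<^sub>m (r j)"
| "ypath n r Y j (Suc k) = Y ((j + Suc k * (n - 1)) mod n) * ypath n r Y j k"

definition is_CM :: "nat \<Rightarrow> nat \<Rightarrow> (nat \<Rightarrow> nat) \<Rightarrow> (nat \<Rightarrow> complex fps mat)
    \<Rightarrow> (nat \<Rightarrow> complex fps mat) \<Rightarrow> bool" where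
  "is_CM n m r X Y \<longleftrightarrow>
     (\<forall>j<n. X j \<in> carrier_mat (r (vsucc n j)) (r j) \<and> Y j \<in> carrier_mat (r j) (r (vsucc n j))) \<and>
     (\<forall>j<n. Y j * X j = fps_X \<cdot>\<^sub>m 1\<^sub>m (r j)) \<and>
     (\<forall>j<n. X (vpred n j) * Y (vpred n j) = fps_X \<cdot>\<^sub>m 1\<^sub>m (r j)) \<and>
     (\<forall>j<n. xpath n r X j m = ypath n r Y j (n - m))"

definition is_hom :: "nat \<Rightarrow> (nat \<Rightarrow> nat) \<Rightarrow> (nat \<Rightarrow> complex fps mat) \<Rightarrow> (nat \<Rightarrow> complex fps mat)
    \<Rightarrow> (nat \<Rightarrow> nat) \<Rightarrow> (nat \<Rightarrow> complex fps mat) \<Rightarrow> (nat \<Rightarrow> complex fps mat)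
    \<Rightarrow> (nat \<Rightarrow> complex fps mat) \<Rightarrow> bool" where
  "is_hom n r X Y s X' Y' f \<longleftrightarrow>
     (\<forall>j<n. f j \<in> carrier_mat (s j) (r j) \<and>
            f (vsucc n j) * X j = X' j * f j \<and>
            f j * Y j = Y' j * f (vsucc n j))"

end

theory Submission
  imports Defs
begin


lemma smult_one_left:
  assumes "A \<in> carrier_mat a b"
  shows "(c \<cdot>\<^sub>m 1\<^sub>m a) * A = (c::'x::comm_semiring_1) \<cdot>\<^sub>m A"
  using assms by (subst mult_smult_assoc_mat[of _ a a _ b]) auto

lemma smult_one_right:
  assumes "A \<in> carrier_mat a b"
  shows "A * (c \<cdot>\<^sub>m 1\<^sub>m b) = (c::'x::comm_semiring_1) \<cdot>\<^sub>m A"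
  using assms by (subst mult_smult_distrib[of _ a b _ b]) auto

lemma smult_cancel:
  assumes "A \<in> carrier_mat a b" "B \<in> carrier_mat a b" "(c::'x::idom) \<noteq> 0"
    "c \<cdot>\<^sub>m A = c \<cdot>\<^sub>m B"
  shows "A = B"
proof (rule eq_matI)
  fix i j assume "i < dim_row B" "j < dim_col B"
  then have "(c \<cdot>\<^sub>m A) $$ (i,j) = (c \<cdot>\<^sub>m B) $$ (i,j)" using assms(4) by simp
  then show "A $$ (i,j) = B $$ (i,j)" using assms(1-3) \<open>i < dim_row B\<close> \<open>j < dim_col B\<close> by auto
qed (use assms in auto)


lemma vsucc_mod: "vsucc n (a mod n) = Suc a mod n"
  unfolding vsucc_def by (simp add: mod_Suc_eq)

lemma xpath_carrier:
  assumes "is_CM n m r X Y" "j < n"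
  shows "xpath n r X j k \<in> carrier_mat (r ((j+k) mod n)) (r j)"
proof (induction k)
  case 0 then show ?case using assms by simp
next
  case (Suc k)
  have "(j+k) mod n < n" using assms by simp
  then have "X ((j+k) mod n) \<in> carrier_mat (r (vsucc n ((j+k) mod n))) (r ((j+k) mod n))"
    using assms(1) unfolding is_CM_def by blast
  then have XC: "X ((j+k) mod n) \<in> carrier_mat (r ((j + Suc k) mod n)) (r ((j+k) mod n))"
    by (simp add: vsucc_mod)
  show ?case by (simp only: xpath.simps) (rule mult_carrier_mat[OF XC Suc.IH])
qed

lemma ypath_arith: "0 < n \<Longrightarrow> Suc (j + Suc k * (n - 1)) = j + k*(n-1) + n"
  by (cases n) auto

lemma ypath_carrier:
  assumes "is_CM n m r X Y" "j < n"
  shows "ypath n r Y j k \<in> carrier_mat (r ((j+k*(n-1)) mod n)) (r j)"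
proof (induction k)
  case 0 then show ?case using assms by simp
next
  case (Suc k)
  have "(j + Suc k * (n-1)) mod n < n" using assms by simp
  then have "Y ((j + Suc k * (n-1)) mod n) \<in> carrier_mat (r ((j + Suc k * (n-1)) mod n)) (r (vsucc n ((j + Suc k * (n-1)) mod n)))"
    using assms(1) unfolding is_CM_def by blast
  moreover have "vsucc n ((j + Suc k * (n-1)) mod n) = (j + k*(n-1)) mod n"
  proof -
    have npos: "0 < n" using assms(2) by simp
    have "vsucc n ((j + Suc k * (n-1)) mod n) = Suc (j + Suc k * (n-1)) mod n" by (rule vsucc_mod)
    also have "\<dots> = (j + k*(n-1) + n) mod n" by (simp only: ypath_arith[OF npos])
    also have "\<dots> = (j + k*(n-1)) mod n" by (rule mod_add_self2)
    finally show ?thesis .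
  qed
  ultimately have YC: "Y ((j + Suc k * (n-1)) mod n) \<in> carrier_mat (r ((j + Suc k * (n-1)) mod n)) (r ((j + k*(n-1)) mod n))"
    by simp
  show ?case by (simp only: ypath.simps) (rule mult_carrier_mat[OF YC Suc.IH])
qed



lemma xpath_concat:
  assumes "is_CM n m r X Y" "j < n"
  shows "xpath n r X j (a+b) = xpath n r X ((j+a) mod n) b * xpath n r X j a"
proof (induction b)
  case 0 then show ?case using xpath_carrier[OF assms, of a] by simp
next
  case (Suc b)
  have j': "(j+a) mod n < n" using assms by simp
  have "(j + (a + b)) mod n < n" using assms by simp
  then have XC: "X ((j + (a + b)) mod n) \<in> carrier_mat (r (vsucc n ((j+(a+b)) mod n))) (r ((j+(a+b)) mod n))"
    using assms(1) unfolding is_CM_def by blast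
  have e: "((j+a) mod n + b) mod n = (j + (a+b)) mod n" by (simp add: mod_add_left_eq add.assoc)
  have C1: "xpath n r X ((j+a) mod n) b \<in> carrier_mat (r ((j + (a+b)) mod n)) (r ((j+a) mod n))"
    using xpath_carrier[OF assms(1) j', of b] e by simp
  have C2: "xpath n r X j a \<in> carrier_mat (r ((j+a) mod n)) (r j)" using xpath_carrier[OF assms] by simp
  have "xpath n r X j (a + Suc b) = X ((j + (a + b)) mod n) * xpath n r X j (a+b)" by simp
  also have "\<dots> = X ((j + (a + b)) mod n) * (xpath n r X ((j+a) mod n) b * xpath n r X j a)" using Suc by simp
  also have "\<dots> = (X ((j + (a + b)) mod n) * xpath n r X ((j+a) mod n) b) * xpath n r X j a"
    using assoc_mult_mat[OF XC C1 C2] by simp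
  also have "\<dots> = xpath n r X ((j+a) mod n) (Suc b) * xpath n r X j a" using e by simp
  finally show ?case .
qed



lemma smult_smult_mat: "a \<cdot>\<^sub>m (b \<cdot>\<^sub>m A) = (a * b :: 'x::semigroup_mult) \<cdot>\<^sub>m A"
  by (rule eq_matI) (auto simp: mult.assoc)

lemma vpred_mod: "0 < n \<Longrightarrow> vpred n (a mod n) = (a + (n - 1)) mod n"
  unfolding vpred_def by (rule mod_add_left_eq)

lemma one_smult_mat': "(1::'x::monoid_mult) \<cdot>\<^sub>m A = A"
  by (rule eq_matI) auto

lemma xy_loop:
  assumes cm: "is_CM n m r X Y" and jn: "j < n"
  shows "xpath n r X ((j + k*(n-1)) mod n) k * ypath n r Y j k = fps_X ^ k \<cdot>\<^sub>m 1\<^sub>m (r j)"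
proof (induction k)
  case 0 then show ?case using jn by (simp add: one_smult_mat')
next
  case (Suc k)
  have npos: "0 < n" using jn by simp
  define jk where "jk = (j + k*(n-1)) mod n"
  define j' where "j' = (j + Suc k*(n-1)) mod n"
  have jkn: "jk < n" and j'n: "j' < n" using npos unfolding jk_def j'_def by auto
  have vs: "vsucc n j' = jk"
  proof -
    have "vsucc n j' = Suc (j + Suc k * (n-1)) mod n" unfolding j'_def by (rule vsucc_mod)
    also have "\<dots> = (j + k*(n-1) + n) mod n" by (simp only: ypath_arith[OF npos])
    also have "\<dots> = jk" unfolding jk_def by (rule mod_add_self2)
    finally show ?thesis .
  qed
  have vp: "vpred n jk = j'"
  proof -
    have "vpred n jk = (j + k*(n-1) + (n-1)) mod n" unfolding jk_def by (rule vpred_mod[OF npos])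
    also have "j + k*(n-1) + (n-1) = j + Suc k*(n-1)" by simp
    finally show ?thesis unfolding j'_def .
  qed
  have XC: "X j' \<in> carrier_mat (r jk) (r j')" using cm j'n vs unfolding is_CM_def by metis
  have YC: "Y j' \<in> carrier_mat (r j') (r jk)" using cm j'n vs unfolding is_CM_def by metis
  have XY: "X j' * Y j' = fps_X \<cdot>\<^sub>m 1\<^sub>m (r jk)" using cm jkn vp unfolding is_CM_def by metis
  have PC: "xpath n r X jk k \<in> carrier_mat (r ((jk + k) mod n)) (r jk)" using xpath_carrier[OF cm jkn] .
  have QC: "ypath n r Y j k \<in> carrier_mat (r jk) (r j)" using ypath_carrier[OF cm jn] unfolding jk_def .
  have IH: "xpath n r X jk k * ypath n r Y j k = fps_X ^ k \<cdot>\<^sub>m 1\<^sub>m (r j)" using Suc.IH unfolding jk_def .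
  have x1: "xpath n r X j' 1 = X j'" using XC j'n by simp
  have "xpath n r X j' (Suc k) = xpath n r X j' (1 + k)" by simp
  also have "\<dots> = xpath n r X ((j' + 1) mod n) k * xpath n r X j' 1" by (rule xpath_concat[OF cm j'n])
  also have "(j' + 1) mod n = jk" using vs unfolding vsucc_def .
  finally have xs: "xpath n r X j' (Suc k) = xpath n r X jk k * X j'" using x1 by simp
  have ys: "ypath n r Y j (Suc k) = Y j' * ypath n r Y j k" unfolding j'_def by simp
  have "xpath n r X j' (Suc k) * ypath n r Y j (Suc k) = (xpath n r X jk k * X j') * (Y j' * ypath n r Y j k)"
    using xs ys by simp
  also have "\<dots> = xpath n r X jk k * (X j' * (Y j' * ypath n r Y j k))"
    using assoc_mult_mat[OF PC XC mult_carrier_mat[OF YC QC]] .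
  also have "X j' * (Y j' * ypath n r Y j k) = (X j' * Y j') * ypath n r Y j k"
    using assoc_mult_mat[OF XC YC QC] by simp
  also have "\<dots> = fps_X \<cdot>\<^sub>m ypath n r Y j k" using XY smult_one_left[OF QC] by simp
  also have "xpath n r X jk k * (fps_X \<cdot>\<^sub>m ypath n r Y j k) = fps_X \<cdot>\<^sub>m (xpath n r X jk k * ypath n r Y j k)"
    using mult_smult_distrib[OF PC QC] .
  also have "\<dots> = fps_X ^ Suc k \<cdot>\<^sub>m 1\<^sub>m (r j)" using IH by (simp add: smult_smult_mat)
  finally show ?case unfolding j'_def .
qed



lemma assoc_dim:
  assumes "dim_col A = dim_row B" "dim_col B = dim_row C"
  shows "(A * B) * (C::'x::semiring_0 mat) = A * (B * C)"
proof -
  have a: "A \<in> carrier_mat (dim_row A) (dim_col A)" by (rule carrier_matI) simp_all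
  have b: "B \<in> carrier_mat (dim_col A) (dim_col B)" using assms by (intro carrier_matI) simp_all
  have c: "C \<in> carrier_mat (dim_col B) (dim_col C)" using assms by (intro carrier_matI) simp_all
  show ?thesis by (rule assoc_mult_mat[OF a b c])
qed

lemma carrier_self: "A \<in> carrier_mat (dim_row A) (dim_col A)"
  by (rule carrier_matI) simp_all

lemma smult_left_dim: assumes "dim_col A = dim_row B" shows "(c \<cdot>\<^sub>m A) * B = (c::'x::comm_semiring_0) \<cdot>\<^sub>m (A * B)"
proof -
  have b: "B \<in> carrier_mat (dim_col A) (dim_col B)" using assms by (intro carrier_matI) simp_all
  show ?thesis by (rule mult_smult_assoc_mat[OF carrier_self b])
qed

lemma smult_right_dim: assumes "dim_col A = dim_row B" shows "A * (c \<cdot>\<^sub>m B) = (c::'x::comm_semiring_0) \<cdot>\<^sub>m (A * B)"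
proof -
  have b: "B \<in> carrier_mat (dim_col A) (dim_col B)" using assms by (intro carrier_matI) simp_all
  show ?thesis by (rule mult_smult_distrib[OF carrier_self b])
qed

lemma one_right_dim: assumes "dim_col A = k" shows "A * (c \<cdot>\<^sub>m 1\<^sub>m k) = (c::'x::comm_semiring_1) \<cdot>\<^sub>m A"
proof -
  have a: "A \<in> carrier_mat (dim_row A) k" using assms by (intro carrier_matI) simp_all
  show ?thesis by (rule smult_one_right[OF a])
qed

lemma one_left_dim: assumes "dim_row A = k" shows "(c \<cdot>\<^sub>m 1\<^sub>m k) * A = (c::'x::comm_semiring_1) \<cdot>\<^sub>m A"
proof -
  have a: "A \<in> carrier_mat k (dim_col A)" using assms by (intro carrier_matI) simp_all
  show ?thesis by (rule smult_one_left[OF a])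
qed

lemma pair_assoc:
  assumes "A * B = c \<cdot>\<^sub>m 1\<^sub>m k" "dim_col A = dim_row B" "dim_row Z = k"
  shows "A * (B * Z) = (c::'x::comm_semiring_1) \<cdot>\<^sub>m Z"
proof -
  have "dim_col B = k" using arg_cong[OF assms(1), of dim_col] by simp
  then have "A * (B * Z) = (A * B) * Z" using assoc_dim[of A B Z] assms by simp
  also have "\<dots> = c \<cdot>\<^sub>m Z" using assms(1,3) one_left_dim by simp
  finally show ?thesis .
qed

lemma loop_arith: fixes m n :: nat shows "1 \<le> m \<Longrightarrow> m < n \<Longrightarrow> (n-m)*(n-1) = (n-m-1)*n + m"
proof -
  assume a: "1 \<le> m" "m < n"
  obtain p where n: "n = m + Suc p" using a by (metis add_Suc_right less_imp_Suc_add)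
  show ?thesis unfolding n by (simp add: algebra_simps)
qed

lemma xpath_loop:
  assumes cm: "is_CM n m r X Y" and jn: "j < n" and m1: "1 \<le> m" and mn: "m < n"
  shows "xpath n r X j n = fps_X ^ (n-m) \<cdot>\<^sub>m 1\<^sub>m (r j)"
proof -
  have e: "(j + (n-m)*(n-1)) mod n = (j + m) mod n"
  proof -
    have eq: "j + (n-m)*(n-1) = (j + m) + (n-m-1)*n" using loop_arith[OF m1 mn] by simp
    show ?thesis unfolding eq by (rule mod_mult_self1)
  qed
  have "xpath n r X j n = xpath n r X j (m + (n-m))" using mn by simp
  also have "\<dots> = xpath n r X ((j+m) mod n) (n-m) * xpath n r X j m" by (rule xpath_concat[OF cm jn])
  also have "xpath n r X j m = ypath n r Y j (n-m)" using cm jn unfolding is_CM_def by blast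
  also have "xpath n r X ((j+m) mod n) (n-m) * ypath n r Y j (n-m) = fps_X ^ (n-m) \<cdot>\<^sub>m 1\<^sub>m (r j)"
    using xy_loop[OF cm jn, of "n-m"] e by simp
  finally show ?thesis .
qed

lemma vpred_vsucc: "a < n \<Longrightarrow> vpred n (vsucc n a) = a"
proof -
  assume an: "a < n"
  have "vpred n (vsucc n a) = ((a+1) mod n + (n-1)) mod n" unfolding vpred_def vsucc_def by simp
  also have "\<dots> = (a + 1 + (n-1)) mod n" by (rule mod_add_left_eq)
  also have "a + 1 + (n-1) = a + n" using an by simp
  also have "(a + n) mod n = a" using an by simp
  finally show ?thesis .
qed

lemma hom_inj:
  assumes cm: "is_CM n m r X Y" and cm': "is_CM n m s X' Y'" and vn: "v < n"
    and hf: "is_hom n r X Y s X' Y' f" and hg: "is_hom n r X Y s X' Y' g" and fg: "f v = g v"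
  shows "f ((v + k) mod n) = g ((v + k) mod n)"
proof (induction k)
  case 0 then show ?case using fg vn by simp
next
  case (Suc k)
  define a where "a = (v + k) mod n"
  define b where "b = vsucc n a"
  have an: "a < n" using vn unfolding a_def by simp
  have bn: "b < n" using vn unfolding b_def vsucc_def by simp
  have b': "(v + Suc k) mod n = b" unfolding b_def a_def by (simp add: vsucc_mod)
  have vp: "vpred n b = a" unfolding b_def using vpred_vsucc[OF an] .
  have XC: "X a \<in> carrier_mat (r b) (r a)" and YC: "Y a \<in> carrier_mat (r a) (r b)"
    using cm an unfolding is_CM_def b_def by blast+
  have XY: "X a * Y a = fps_X \<cdot>\<^sub>m 1\<^sub>m (r b)" using cm bn vp unfolding is_CM_def by metis
  have fb: "f b \<in> carrier_mat (s b) (r b)" using hf bn unfolding is_hom_def by blast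
  have gb: "g b \<in> carrier_mat (s b) (r b)" using hg bn unfolding is_hom_def by blast
  have "f b * X a = X' a * f a" using hf an unfolding is_hom_def b_def by blast
  also have "f a = g a" using Suc.IH unfolding a_def .
  also have "X' a * g a = g b * X a" using hg an unfolding is_hom_def b_def by metis
  finally have "f b * X a = g b * X a" .
  then have "(f b * X a) * Y a = (g b * X a) * Y a" by simp
  then have "f b * (X a * Y a) = g b * (X a * Y a)"
    using assoc_mult_mat[OF fb XC YC] assoc_mult_mat[OF gb XC YC] by simp
  then have "fps_X \<cdot>\<^sub>m f b = fps_X \<cdot>\<^sub>m g b" using XY smult_one_right[OF fb] smult_one_right[OF gb] by simp
  then have "f b = g b" by (rule smult_cancel[OF fb gb fps_X_neq_zero])
  then show ?case using b' by simp
qed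



lemma kd_at: fixes k n v :: nat assumes "k < n" "v < n" shows "((v + k) mod n + n - v) mod n = k"
proof (cases "v + k < n")
  case True then show ?thesis using assms by simp
next
  case False
  then have "(v + k) mod n = v + k - n" using assms by (simp add: mod_if)
  then show ?thesis using False assms by simp
qed

lemma kd_rep: fixes j n v :: nat assumes "j < n" "v < n" shows "(v + (j + n - v) mod n) mod n = j"
proof -
  have "(v + (j + n - v) mod n) mod n = (v + (j + n - v)) mod n" by (simp add: mod_add_right_eq)
  also have "v + (j + n - v) = j + n" using assms by simp
  finally show ?thesis using assms by simp
qed

lemma kd_back: fixes k n v :: nat assumes "k < n" "v < n" shows "((v + k) mod n + (n - k)) mod n = v"
proof -
  have "((v + k) mod n + (n - k)) mod n = (v + k + (n - k)) mod n" by (simp add: mod_add_left_eq)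
  also have "v + k + (n - k) = v + n" using assms by simp
  finally show ?thesis using assms by simp
qed



lemma hom_step:
  assumes cm: "is_CM n m r X Y" and cm': "is_CM n m s X' Y'" and m1: "1 \<le> m" and mn: "m < n"
    and vn: "v < n" and GC: "G \<in> carrier_mat (s v) (r v)"
    and fdef: "\<And>j. f j = xpath n s X' v ((j + n - v) mod n) * G * xpath n r X j (n - (j + n - v) mod n)"
    and kn: "k < n"
  defines "j \<equiv> (v + k) mod n"
  shows "f j \<in> carrier_mat (s j) (r j) \<and> f (vsucc n j) * X j = X' j * f j \<and> f j * Y j = Y' j * f (vsucc n j)"
proof -
  define b where "b = vsucc n j"
  have jn: "j < n" and bn: "b < n" using vn unfolding j_def b_def vsucc_def by auto
  have b': "b = (v + Suc k) mod n" unfolding b_def j_def by (simp add: vsucc_mod)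
  have vp: "vpred n b = j" unfolding b_def using vpred_vsucc[OF jn] .
  have XC: "X j \<in> carrier_mat (r b) (r j)" and YC: "Y j \<in> carrier_mat (r j) (r b)"
    using cm jn unfolding is_CM_def b_def by blast+
  have X'C: "X' j \<in> carrier_mat (s b) (s j)" and Y'C: "Y' j \<in> carrier_mat (s j) (s b)"
    using cm' jn unfolding is_CM_def b_def by blast+
  have XY: "X j * Y j = fps_X \<cdot>\<^sub>m 1\<^sub>m (r b)" using cm bn vp unfolding is_CM_def by metis
  have Y'X': "Y' j * X' j = fps_X \<cdot>\<^sub>m 1\<^sub>m (s j)" using cm' jn unfolding is_CM_def by metis
  have kj: "(j + n - v) mod n = k" unfolding j_def using kd_at[OF kn vn] .
  have fj: "f j = xpath n s X' v k * G * xpath n r X j (n - k)" using fdef[of j] kj by simp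
  have PC: "xpath n s X' v k \<in> carrier_mat (s j) (s v)" using xpath_carrier[OF cm' vn, of k] unfolding j_def .
  have QC: "xpath n r X j (n - k) \<in> carrier_mat (r v) (r j)" using xpath_carrier[OF cm jn, of "n-k"]
    kd_back[OF kn vn] unfolding j_def by simp
  have fjC: "f j \<in> carrier_mat (s j) (r j)" unfolding fj using PC GC QC by (metis mult_carrier_mat)
  have PS: "xpath n s X' v (Suc k) = X' j * xpath n s X' v k" unfolding j_def by simp
  have dims: "dim_row (X j) = r b" "dim_col (X j) = r j" "dim_row (Y j) = r j" "dim_col (Y j) = r b"
    "dim_row (X' j) = s b" "dim_col (X' j) = s j" "dim_row (Y' j) = s j" "dim_col (Y' j) = s b"
    "dim_row G = s v" "dim_col G = r v"
    "dim_row (xpath n s X' v k) = s j" "dim_col (xpath n s X' v k) = s v"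
    using XC YC X'C Y'C GC PC by auto
  have pairY'X': "\<And>Z. dim_row Z = s j \<Longrightarrow> Y' j * (X' j * Z) = fps_X \<cdot>\<^sub>m Z"
    by (rule pair_assoc[OF Y'X']) (simp add: dims)
  show ?thesis
  proof (cases "Suc k < n")
    case True
    have kb: "(b + n - v) mod n = Suc k" unfolding b' using kd_at[OF True vn] .
    define R where "R = xpath n r X b (n - Suc k)"
    have RC: "R \<in> carrier_mat (r v) (r b)" using xpath_carrier[OF cm bn, of "n - Suc k"]
      kd_back[OF True vn] unfolding R_def b' by simp
    have fb: "f b = (X' j * xpath n s X' v k) * G * R" using fdef[of b] kb PS unfolding R_def by simp
    have e: "n - k = 1 + (n - Suc k)" using True by simp
    have "xpath n r X j (n - k) = xpath n r X j (1 + (n - Suc k))" by (simp only: e)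
    also have "\<dots> = xpath n r X ((j + 1) mod n) (n - Suc k) * xpath n r X j 1" by (rule xpath_concat[OF cm jn])
    also have "(j + 1) mod n = b" unfolding b_def vsucc_def ..
    also have "xpath n r X j 1 = X j" using XC jn by simp
    finally have Qs: "xpath n r X j (n - k) = R * X j" unfolding R_def .
    have dR: "dim_row R = r v" "dim_col R = r b" using RC by auto
    have c1: "f b * X j = X' j * f j"
      unfolding fb fj Qs by (simp add: assoc_dim dims dR)
    have c2: "f j * Y j = Y' j * f b"
      unfolding fb fj Qs by (simp add: assoc_dim dims dR XY one_right_dim smult_right_dim pairY'X')
    show ?thesis using fjC c1 c2 unfolding b_def by simp
  next
    case False
    then have kn1: "Suc k = n" using kn by simp
    have bv: "b = v" unfolding b' kn1 using vn by simp
    define T where "T = (fps_X :: complex fps) ^ (n - m)"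
    have fv: "f v = T \<cdot>\<^sub>m G"
    proof -
      have "f v = xpath n s X' v 0 * G * xpath n r X v n" using fdef[of v] vn by simp
      also have "\<dots> = 1\<^sub>m (s v) * G * (T \<cdot>\<^sub>m 1\<^sub>m (r v))" using xpath_loop[OF cm vn m1 mn] unfolding T_def by simp
      also have "\<dots> = T \<cdot>\<^sub>m G" using GC by (simp add: one_right_dim)
      finally show ?thesis .
    qed
    have nk1: "n - k = Suc 0" using kn1 by simp
    have Q1: "xpath n r X j (n - k) = X j" unfolding nk1 using XC jn by simp
    have Ploop: "X' j * xpath n s X' v k = T \<cdot>\<^sub>m 1\<^sub>m (s v)"
      using PS xpath_loop[OF cm' vn m1 mn] kn1 unfolding T_def by simp
    have pairX'P: "\<And>Z. dim_row Z = s v \<Longrightarrow> X' j * (xpath n s X' v k * Z) = T \<cdot>\<^sub>m Z"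
      by (rule pair_assoc[OF Ploop]) (simp add: dims)
    have c1: "f b * X j = X' j * f j"
      unfolding bv fv fj Q1 using bv by (simp add: assoc_dim dims smult_left_dim pairX'P)
    have c2: "f j * Y j = Y' j * f b"
    proof -
      have "f j * Y j = fps_X \<cdot>\<^sub>m (xpath n s X' v k * G)"
        unfolding fj Q1 using bv by (simp add: assoc_dim dims XY one_right_dim smult_right_dim)
      also have "\<dots> = Y' j * (X' j * (xpath n s X' v k * G))" using pairY'X' dims by simp
      also have "X' j * (xpath n s X' v k * G) = T \<cdot>\<^sub>m G" using pairX'P dims by simp
      also have "\<dots> = f b" using fv bv by simp
      finally show ?thesis .
    qed
    show ?thesis using fjC c1 c2 unfolding b_def by simp
  qed
qed

lemma cutoff_sum: "fps_cutoff N h = (\<Sum>d<N. fps_const (fps_nth h d) * fps_X ^ d)"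
proof (rule fps_ext)
  fix e
  have "fps_nth (\<Sum>d<N. fps_const (fps_nth h d) * fps_X ^ d) e = (\<Sum>d<N. fps_nth h d * (if e = d then 1 else 0))"
    by (simp add: fps_sum_nth)
  also have "\<dots> = (\<Sum>d<N. (if e = d then fps_nth h d else 0))" by (rule sum.cong) auto
  also have "\<dots> = (if e < N then fps_nth h e else 0)" by (simp add: sum.delta)
  finally show "fps_nth (fps_cutoff N h) e = fps_nth (\<Sum>d<N. fps_const (fps_nth h d) * fps_X ^ d) e" by simp
qed

lemma delta_sum:
  fixes F :: "nat \<Rightarrow> 'a::comm_monoid_add" and a b N i k :: nat
  assumes "i < a" "k < b"
  shows "(\<Sum>x\<in>{..<a} \<times> {..<b} \<times> {..<N}. (case x of (i', k', d) \<Rightarrow> if i' = i \<and> k' = k then F d else 0))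
     = (\<Sum>d<N. F d)"
proof -
  let ?h = "\<lambda>x. (case x of (i', k', d) \<Rightarrow> if i' = i \<and> k' = k then F d else 0)"
  let ?S = "(\<lambda>d. (i, k, d)) ` {..<N}"
  have sub: "?S \<subseteq> {..<a} \<times> {..<b} \<times> {..<N}" using assms by auto
  have "(\<Sum>x\<in>{..<a} \<times> {..<b} \<times> {..<N}. ?h x) = (\<Sum>x\<in>?S. ?h x)"
  proof (rule sum.mono_neutral_right)
    show "finite ({..<a} \<times> {..<b} \<times> {..<N})" by simp
    show "?S \<subseteq> {..<a} \<times> {..<b} \<times> {..<N}" by (rule sub)
    show "\<forall>x\<in>{..<a} \<times> {..<b} \<times> {..<N} - ?S. ?h x = 0"
    proof
      fix x assume x: "x \<in> {..<a} \<times> {..<b} \<times> {..<N} - ?S"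
      obtain i' k' d where xe: "x = (i', k', d)" by (cases x) auto
      show "?h x = 0"
      proof (cases "i' = i \<and> k' = k")
        case True then have "x \<in> ?S" using x xe by auto
        then show ?thesis using x by blast
      next
        case False then show ?thesis using xe by auto
      qed
    qed
  qed
  also have "\<dots> = (\<Sum>d<N. ?h (i, k, d))" by (subst sum.reindex) (auto simp: inj_on_def)
  also have "\<dots> = (\<Sum>d<N. F d)" by simp
  finally show ?thesis .
qed

theorem lemma5p2:
  fixes n m v :: nat and r s :: "nat \<Rightarrow> nat"
    and X Y X' Y' :: "nat \<Rightarrow> complex fps mat"
  assumes "1 \<le> m" and "m < n" and "v < n"
    and "is_CM n m r X Y" and "is_CM n m s X' Y'"
  shows "(\<forall>f g. is_hom n r X Y s X' Y' f \<longrightarrow> is_hom n r X Y s X' Y' g \<longrightarrow>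
                f v = g v \<longrightarrow> (\<forall>j<n. f j = g j))
       \<and> (\<exists>B. finite B \<and> B \<subseteq> carrier_mat (s v) (r v) \<and>
            (\<forall>g \<in> carrier_mat (s v) (r v). \<exists>f c. is_hom n r X Y s X' Y' f \<and>
                (\<forall>i < s v. \<forall>k < r v.
                   g $$ (i, k) = f v $$ (i, k) + (\<Sum>b\<in>B. fps_const (c b :: complex) * b $$ (i, k)))))"
proof -
  note cm = assms(4) and cm' = assms(5) and m1 = assms(1) and mn = assms(2) and vn = assms(3)
  have part1: "\<forall>f g. is_hom n r X Y s X' Y' f \<longrightarrow> is_hom n r X Y s X' Y' g \<longrightarrow>
                f v = g v \<longrightarrow> (\<forall>j<n. f j = g j)"
  proof (intro allI impI)
    fix f g j assume hf: "is_hom n r X Y s X' Y' f" and hg: "is_hom n r X Y s X' Y' g"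
      and fg: "f v = g v" and jn: "j < n"
    have "f ((v + (j + n - v) mod n) mod n) = g ((v + (j + n - v) mod n) mod n)"
      by (rule hom_inj[OF cm cm' vn hf hg fg])
    then show "f j = g j" by (simp only: kd_rep[OF jn vn])
  qed
  define N where "N = n - m"
  define I where "I = {..<s v} \<times> {..<r v} \<times> {..<N}"
  define \<phi> where "\<phi> = (\<lambda>(i::nat, k::nat, d::nat). mat (s v) (r v) (\<lambda>(a, b). if a = i \<and> b = k then (fps_X::complex fps) ^ d else 0))"
  define B where "B = \<phi> ` I"
  have finI: "finite I" unfolding I_def by simp
  have finB: "finite B" unfolding B_def using finI by simp
  have BC: "B \<subseteq> carrier_mat (s v) (r v)" unfolding B_def \<phi>_def by auto
  have phi_entry: "\<And>i k d. i < s v \<Longrightarrow> k < r v \<Longrightarrow> \<phi> (i, k, d) $$ (i, k) = fps_X ^ d"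
    unfolding \<phi>_def by simp
  have inj: "inj_on \<phi> I"
  proof (rule inj_onI)
    fix x y assume x: "x \<in> I" and y: "y \<in> I" and e: "\<phi> x = \<phi> y"
    obtain i k d where xe: "x = (i, k, d)" by (cases x) auto
    obtain i' k' d' where ye: "y = (i', k', d')" by (cases y) auto
    have ik: "i < s v" "k < r v" using x xe unfolding I_def by auto
    have "\<phi> x $$ (i, k) = \<phi> y $$ (i, k)" using e by simp
    then have "(fps_X::complex fps) ^ d = (if i = i' \<and> k = k' then fps_X ^ d' else 0)"
      using ik unfolding xe ye \<phi>_def by simp
    moreover have "(fps_X::complex fps) ^ d \<noteq> 0" by simp
    ultimately have ii: "i = i'" "k = k'" and dd: "(fps_X::complex fps) ^ d = fps_X ^ d'" by (auto split: if_splits)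
    have "fps_nth ((fps_X::complex fps) ^ d) d = fps_nth ((fps_X::complex fps) ^ d') d" using dd by simp
    then have "d = d'" by (simp split: if_splits)
    then show "x = y" using xe ye ii by simp
  qed
  have part2: "\<forall>g \<in> carrier_mat (s v) (r v). \<exists>f c. is_hom n r X Y s X' Y' f \<and>
                (\<forall>i < s v. \<forall>k < r v.
                   g $$ (i, k) = f v $$ (i, k) + (\<Sum>b\<in>B. fps_const (c b :: complex) * b $$ (i, k)))"
  proof
    fix g :: "complex fps mat" assume gC: "g \<in> carrier_mat (s v) (r v)"
    define G where "G = mat (s v) (r v) (\<lambda>(i, k). fps_shift N (g $$ (i, k)))"
    have GC: "G \<in> carrier_mat (s v) (r v)" unfolding G_def by simp
    define f where "f = (\<lambda>j. xpath n s X' v ((j + n - v) mod n) * G * xpath n r X j (n - (j + n - v) mod n))"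
    define c where "c = (\<lambda>b. case inv_into I \<phi> b of (i, k, d) \<Rightarrow> fps_nth (g $$ (i, k)) d)"
    have hom: "is_hom n r X Y s X' Y' f"
      unfolding is_hom_def
    proof (intro allI impI)
      fix j assume jn: "j < n"
      have kn: "(j + n - v) mod n < n" using jn by simp
      have "f ((v + (j + n - v) mod n) mod n) \<in> carrier_mat (s ((v + (j + n - v) mod n) mod n)) (r ((v + (j + n - v) mod n) mod n)) \<and>
        f (vsucc n ((v + (j + n - v) mod n) mod n)) * X ((v + (j + n - v) mod n) mod n) = X' ((v + (j + n - v) mod n) mod n) * f ((v + (j + n - v) mod n) mod n) \<and>
        f ((v + (j + n - v) mod n) mod n) * Y ((v + (j + n - v) mod n) mod n) = Y' ((v + (j + n - v) mod n) mod n) * f (vsucc n ((v + (j + n - v) mod n) mod n))"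
        by (rule hom_step[OF cm cm' m1 mn vn GC _ kn]) (simp add: f_def)
      then show "f j \<in> carrier_mat (s j) (r j) \<and> f (vsucc n j) * X j = X' j * f j \<and> f j * Y j = Y' j * f (vsucc n j)"
        by (simp only: kd_rep[OF jn vn])
    qed
    define T where "T = (fps_X :: complex fps) ^ N"
    have fv: "f v = T \<cdot>\<^sub>m G"
    proof -
      have "f v = xpath n s X' v 0 * G * xpath n r X v n" using vn unfolding f_def by simp
      also have "\<dots> = 1\<^sub>m (s v) * G * (T \<cdot>\<^sub>m 1\<^sub>m (r v))" using xpath_loop[OF cm vn m1 mn] unfolding T_def N_def by simp
      also have "\<dots> = T \<cdot>\<^sub>m G" using GC by (simp add: one_right_dim)
      finally show ?thesis .
    qed
    have "\<forall>i < s v. \<forall>k < r v. g $$ (i, k) = f v $$ (i, k) + (\<Sum>b\<in>B. fps_const (c b) * b $$ (i, k))"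
    proof (intro allI impI)
      fix i k assume i: "i < s v" and k: "k < r v"
      have "(\<Sum>b\<in>B. fps_const (c b) * b $$ (i, k)) = (\<Sum>x\<in>I. fps_const (c (\<phi> x)) * \<phi> x $$ (i, k))"
        unfolding B_def by (rule sum.reindex[OF inj, unfolded comp_def])
      also have "\<dots> = (\<Sum>x\<in>I. (case x of (i', k', d) \<Rightarrow> if i' = i \<and> k' = k then fps_const (fps_nth (g $$ (i, k)) d) * fps_X ^ d else 0))"
      proof (rule sum.cong[OF refl])
        fix x assume x: "x \<in> I"
        obtain i' k' d where xe: "x = (i', k', d)" by (cases x) auto
        have cx: "c (\<phi> x) = fps_nth (g $$ (i', k')) d" unfolding c_def using inv_into_f_f[OF inj x] xe by simp
        show "fps_const (c (\<phi> x)) * \<phi> x $$ (i, k) = (case x of (i', k', d) \<Rightarrow> if i' = i \<and> k' = k then fps_const (fps_nth (g $$ (i, k)) d) * fps_X ^ d else 0)"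
          using cx i k unfolding xe \<phi>_def by auto
      qed
      also have "\<dots> = (\<Sum>d<N. fps_const (fps_nth (g $$ (i, k)) d) * fps_X ^ d)"
        unfolding I_def by (rule delta_sum[OF i k])
      also have "\<dots> = fps_cutoff N (g $$ (i, k))" by (rule cutoff_sum[symmetric])
      finally have S: "(\<Sum>b\<in>B. fps_const (c b) * b $$ (i, k)) = fps_cutoff N (g $$ (i, k))" .
      have "f v $$ (i, k) = fps_X ^ N * fps_shift N (g $$ (i, k))" using i k unfolding fv T_def G_def by simp
      then show "g $$ (i, k) = f v $$ (i, k) + (\<Sum>b\<in>B. fps_const (c b) * b $$ (i, k))"
        using S fps_shift_cutoff'[of N "g $$ (i, k)"] by simp
    qed
    then show "\<exists>f c. is_hom n r X Y s X' Y' f \<and>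
                (\<forall>i < s v. \<forall>k < r v.
                   g $$ (i, k) = f v $$ (i, k) + (\<Sum>b\<in>B. fps_const (c b :: complex) * b $$ (i, k)))"
      using hom by blast
  qed
  show ?thesis using part1 part2 finB BC by blast
qed


end
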